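(* Let $W\in[0,1]^{k\times k}$ be a symmetric positive semidefinite matrix with all diagonal entries equal to $1$, let ${\boldsymbol\mu}\in\mathbb{R}^k$, and consider the collaborative learning problem with strategy space $\mathbb{R}_+^k$ and linear utilities ${\bf u}({\boldsymbol\theta})=W{\boldsymbol\theta}$ and thresholds $\mu_i$. Then the program $$\min\ \sum_{i=1}^k\theta_i\quad\text{s.t.}\quad W{\boldsymbol\theta}\ge{\boldsymbol\mu},\ \ {\boldsymbol\theta}\ge\mathbf{0},\ \ {\boldsymbol\theta}^\top W{\boldsymbol\theta}-{\boldsymbol\mu}^\top{\boldsymbol\theta}\le0$$ is a convex program, and its optimal solutions are optimal stable equilibria (stable equilibria minimizing $\mathbf{1}^\top{\boldsymbol\theta}$).
   Context: ${\boldsymbol\theta}$ is feasible if $u_i({\boldsymbol\theta})\ge\mu_i$ for all $i$. A feasible ${\boldsymbol\theta}\in\mathbb{R}_+^k$ is a stable equilibrium if for no $i$ is there $0\le\theta_i'<\theta_i$ with $u_i(\theta_i',{\boldsymbol\theta}_{-i})\ge\mu_i$, where $(x,{\boldsymbol\theta}_{-i})$ denotes ${\boldsymbol\theta}$ with $i$-th entry replaced by $x$. *)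

theory Defs
  imports "HOL-Analysis.Analysis"
begin

definition nonneg_vec :: "real^'k \<Rightarrow> bool" where
  "nonneg_vec \<theta> \<longleftrightarrow> (\<forall>i. 0 \<le> \<theta> $ i)"

definition feasible :: "(real^'k \<Rightarrow> real^'k) \<Rightarrow> real^'k \<Rightarrow> real^'k \<Rightarrow> bool" where
  "feasible u \<mu> \<theta> \<longleftrightarrow> (\<forall>i. u \<theta> $ i \<ge> \<mu> $ i)"

definition stable_equilibrium ::
  "(real^'k \<Rightarrow> real^'k) \<Rightarrow> real^'k \<Rightarrow> real^'k \<Rightarrow> bool" where
  "stable_equilibrium u \<mu> \<theta> \<longleftrightarrow>
     nonneg_vec \<theta> \<and> feasible u \<mu> \<theta> \<and>
     \<not> (\<exists>i x. 0 \<le> x \<and> x < \<theta> $ i \<and> u (\<chi> j. if j = i then x else \<theta> $ j) $ i \<ge> \<mu> $ i)"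

definition total :: "real^'k \<Rightarrow> real" where
  "total \<theta> = (\<Sum>i\<in>UNIV. \<theta> $ i)"

definition optimal_stable_equilibrium ::
  "(real^'k \<Rightarrow> real^'k) \<Rightarrow> real^'k \<Rightarrow> real^'k \<Rightarrow> bool" where
  "optimal_stable_equilibrium u \<mu> \<theta> \<longleftrightarrow>
     stable_equilibrium u \<mu> \<theta> \<and>
     (\<forall>\<theta>'. stable_equilibrium u \<mu> \<theta>' \<longrightarrow> total \<theta> \<le> total \<theta>')"

definition program_feasible :: "real^'k^'k \<Rightarrow> real^'k \<Rightarrow> (real^'k) set" where
  "program_feasible W \<mu> = {\<theta>. (\<forall>i. (W *v \<theta>) $ i \<ge> \<mu> $ i) \<and> nonneg_vec \<theta> \<and>
       \<theta> \<bullet> (W *v \<theta>) - \<mu> \<bullet> \<theta> \<le> 0}"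

end

theory Submission
  imports Defs
begin

lemma mv_comb: "(W::real^'k^'k) *v (u *\<^sub>R x + v *\<^sub>R y) = u *\<^sub>R (W *v x) + v *\<^sub>R (W *v y)"
  by (simp add: matrix_vector_right_distrib matrix_vector_mult_scaleR)

lemma quad_id:
  fixes W :: "real^'k^'k"
  assumes "u + v = 1"
  shows "u * (x \<bullet> (W *v x)) + v * (y \<bullet> (W *v y)) - (u *\<^sub>R x + v *\<^sub>R y) \<bullet> (W *v (u *\<^sub>R x + v *\<^sub>R y))
     = u * v * ((x - y) \<bullet> (W *v (x - y)))"
proof -
  have v: "v = 1 - u" using assms by simp
  show ?thesis unfolding v mv_comb
    by (simp add: matrix_vector_mult_diff_distrib inner_add_left inner_add_right inner_diff_left inner_diff_right algebra_simps)
qed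

lemma quad_convex:
  fixes W :: "real^'k^'k"
  assumes psd: "\<forall>x. 0 \<le> x \<bullet> (W *v x)"
  shows "convex_on UNIV (\<lambda>\<theta>. \<theta> \<bullet> (W *v \<theta>) - \<mu> \<bullet> \<theta>)"
  unfolding convex_on_def
proof (intro conjI ballI allI impI)
  fix x y :: "real^'k" and u v :: real
  assume uv: "0 \<le> u" "0 \<le> v" "u + v = 1"
  have "0 \<le> u * v * ((x - y) \<bullet> (W *v (x - y)))" using psd uv by simp
  moreover have "\<mu> \<bullet> (u *\<^sub>R x + v *\<^sub>R y) = u * (\<mu> \<bullet> x) + v * (\<mu> \<bullet> y)"
    by (simp add: inner_add_right)
  ultimately show "(u *\<^sub>R x + v *\<^sub>R y) \<bullet> (W *v (u *\<^sub>R x + v *\<^sub>R y)) - \<mu> \<bullet> (u *\<^sub>R x + v *\<^sub>R y)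
         \<le> u * (x \<bullet> (W *v x) - \<mu> \<bullet> x) + v * (y \<bullet> (W *v y) - \<mu> \<bullet> y)"
    using quad_id[OF uv(3), of x W y] by (simp add: algebra_simps)
qed simp

lemma update_mv:
  fixes W :: "real^'k^'k"
  assumes diag: "\<forall>i. W $ i $ i = 1"
  shows "(W *v (\<chi> j. if j = i then x else \<theta> $ j)) $ i = (W *v \<theta>) $ i - \<theta> $ i + x"
proof -
  have "\<And>j. W $ i $ j * (if j = i then x else \<theta> $ j) = W $ i $ j * \<theta> $ j + (if j = i then x - \<theta> $ i else 0)"
    using diag by auto
  then have "(\<Sum>j\<in>UNIV. W $ i $ j * (if j = i then x else \<theta> $ j)) = (\<Sum>j\<in>UNIV. W $ i $ j * \<theta> $ j) + (x - \<theta> $ i)"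
    by (simp add: sum.distrib)
  then show ?thesis by (simp add: matrix_vector_mult_def)
qed

lemma inner_sum: "(a::real^'k) \<bullet> b = (\<Sum>i\<in>UNIV. a $ i * b $ i)"
  by (simp add: inner_vec_def)

theorem theorem5:
  fixes W :: "real^'k^'k" and \<mu> :: "real^'k"
  assumes entries: "\<forall>i j. 0 \<le> W $ i $ j \<and> W $ i $ j \<le> 1"
    and sym: "transpose W = W"
    and psd: "\<forall>x. 0 \<le> x \<bullet> (W *v x)"
    and diag: "\<forall>i. W $ i $ i = 1"
  shows "convex_on UNIV total
       \<and> convex_on UNIV (\<lambda>\<theta>. \<theta> \<bullet> (W *v \<theta>) - \<mu> \<bullet> \<theta>)
       \<and> (\<forall>i. convex_on UNIV (\<lambda>\<theta>. \<mu> $ i - (W *v \<theta>) $ i))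
       \<and> (\<forall>i. convex_on UNIV (\<lambda>\<theta>::real^'k. - (\<theta> $ i)))
       \<and> convex (program_feasible W \<mu>)
       \<and> (\<forall>\<theta>. (\<theta> \<in> program_feasible W \<mu> \<and>
               (\<forall>\<theta>'\<in>program_feasible W \<mu>. total \<theta> \<le> total \<theta>'))
             \<longrightarrow> optimal_stable_equilibrium (\<lambda>\<theta>. W *v \<theta>) \<mu> \<theta>)"
proof -
  have c1: "convex_on UNIV total"
    unfolding convex_on_def total_def
    by (simp add: sum.distrib sum_distrib_left)
  have c2: "convex_on UNIV (\<lambda>\<theta>. \<theta> \<bullet> (W *v \<theta>) - \<mu> \<bullet> \<theta>)"
    using quad_convex[OF psd] .
  have c3: "\<forall>i. convex_on UNIV (\<lambda>\<theta>. \<mu> $ i - (W *v \<theta>) $ i)"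
  proof
    fix i
    show "convex_on UNIV (\<lambda>\<theta>. \<mu> $ i - (W *v \<theta>) $ i)"
      unfolding convex_on_def
    proof (intro conjI ballI allI impI)
      fix x y :: "real^'k" and u v :: real
      assume uv: "0 \<le> u" "0 \<le> v" "u + v = 1"
      then have "\<mu> $ i = u * \<mu> $ i + v * \<mu> $ i" by (metis distrib_right mult_1)
      then show "\<mu> $ i - (W *v (u *\<^sub>R x + v *\<^sub>R y)) $ i \<le> u * (\<mu> $ i - (W *v x) $ i) + v * (\<mu> $ i - (W *v y) $ i)"
        by (simp add: mv_comb algebra_simps)
    qed simp
  qed
  have c4: "\<forall>i. convex_on UNIV (\<lambda>\<theta>::real^'k. - (\<theta> $ i))"
    unfolding convex_on_def by (simp add: algebra_simps)
  have c5: "convex (program_feasible W \<mu>)"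
    unfolding convex_def program_feasible_def nonneg_vec_def
  proof (intro allI ballI impI conjI)
    fix x y :: "real^'k" and u v :: real and i
    assume x: "x \<in> {\<theta>. (\<forall>i. \<mu> $ i \<le> (W *v \<theta>) $ i) \<and> (\<forall>i. 0 \<le> \<theta> $ i) \<and> \<theta> \<bullet> (W *v \<theta>) - \<mu> \<bullet> \<theta> \<le> 0}"
      and y: "y \<in> {\<theta>. (\<forall>i. \<mu> $ i \<le> (W *v \<theta>) $ i) \<and> (\<forall>i. 0 \<le> \<theta> $ i) \<and> \<theta> \<bullet> (W *v \<theta>) - \<mu> \<bullet> \<theta> \<le> 0}"
      and uv: "0 \<le> u" "0 \<le> v" "u + v = 1"
    have "u *\<^sub>R x + v *\<^sub>R y \<in> {\<theta>. \<forall>i. \<mu> $ i \<le> (W *v \<theta>) $ i}"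
    proof
      show "\<forall>i. \<mu> $ i \<le> (W *v (u *\<^sub>R x + v *\<^sub>R y)) $ i"
      proof
        fix i
        have "\<mu> $ i - (W *v (u *\<^sub>R x + v *\<^sub>R y)) $ i \<le> u * (\<mu> $ i - (W *v x) $ i) + v * (\<mu> $ i - (W *v y) $ i)"
          using c3 uv unfolding convex_on_def by blast
        also have "\<dots> \<le> 0" using x y uv
          by (simp add: mult_nonneg_nonpos add_nonpos_nonpos)
        finally show "\<mu> $ i \<le> (W *v (u *\<^sub>R x + v *\<^sub>R y)) $ i" by simp
      qed
    qed
    moreover have "\<forall>i. 0 \<le> (u *\<^sub>R x + v *\<^sub>R y) $ i" using x y uv by simp
    moreover have "(u *\<^sub>R x + v *\<^sub>R y) \<bullet> (W *v (u *\<^sub>R x + v *\<^sub>R y)) - \<mu> \<bullet> (u *\<^sub>R x + v *\<^sub>R y) \<le> 0"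
    proof -
      have "(u *\<^sub>R x + v *\<^sub>R y) \<bullet> (W *v (u *\<^sub>R x + v *\<^sub>R y)) - \<mu> \<bullet> (u *\<^sub>R x + v *\<^sub>R y)
         \<le> u * (x \<bullet> (W *v x) - \<mu> \<bullet> x) + v * (y \<bullet> (W *v y) - \<mu> \<bullet> y)"
        using c2 uv unfolding convex_on_def by blast
      also have "\<dots> \<le> 0" using x y uv
        by (simp add: mult_nonneg_nonpos add_nonpos_nonpos)
      finally show ?thesis .
    qed
    ultimately show "u *\<^sub>R x + v *\<^sub>R y \<in> {\<theta>. (\<forall>i. \<mu> $ i \<le> (W *v \<theta>) $ i) \<and> (\<forall>i. 0 \<le> \<theta> $ i) \<and> \<theta> \<bullet> (W *v \<theta>) - \<mu> \<bullet> \<theta> \<le> 0}"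
      by simp
  qed
  have stab_in: "\<theta>' \<in> program_feasible W \<mu>" if st: "stable_equilibrium (\<lambda>\<theta>. W *v \<theta>) \<mu> \<theta>'" for \<theta>'
  proof -
    have nn: "\<forall>i. 0 \<le> \<theta>' $ i" and fe: "\<forall>i. \<mu> $ i \<le> (W *v \<theta>') $ i"
      and ns: "\<And>i x. 0 \<le> x \<Longrightarrow> x < \<theta>' $ i \<Longrightarrow> \<not> (\<mu> $ i \<le> (W *v (\<chi> j. if j = i then x else \<theta>' $ j)) $ i)"
      using st unfolding stable_equilibrium_def nonneg_vec_def feasible_def by blast+
    have trm: "\<theta>' $ i * ((W *v \<theta>') $ i - \<mu> $ i) \<le> 0" for i
    proof (cases "\<theta>' $ i = 0")
      case True then show ?thesis by simp
    next
      case False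
      then have pos: "\<theta>' $ i > 0" using nn by (metis order_le_less)
      have "(W *v \<theta>') $ i - \<mu> $ i \<le> 0"
      proof (rule ccontr)
        assume "\<not> ?thesis"
        then have d: "(W *v \<theta>') $ i - \<mu> $ i > 0" by simp
        define x where "x = max 0 (\<theta>' $ i - ((W *v \<theta>') $ i - \<mu> $ i))"
        have "0 \<le> x" "x < \<theta>' $ i" using pos d unfolding x_def by auto
        moreover have "\<mu> $ i \<le> (W *v (\<chi> j. if j = i then x else \<theta>' $ j)) $ i"
          unfolding update_mv[OF diag] x_def by simp
        ultimately show False using ns by blast
      qed
      then show ?thesis using pos by (simp add: mult_nonneg_nonpos)
    qed
    have "\<theta>' \<bullet> (W *v \<theta>') - \<mu> \<bullet> \<theta>' = (\<Sum>i\<in>UNIV. \<theta>' $ i * ((W *v \<theta>') $ i - \<mu> $ i))"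
      by (simp add: inner_sum sum_subtractf algebra_simps)
    also have "\<dots> \<le> 0" using trm by (simp add: sum_nonpos)
    finally show ?thesis using nn fe unfolding program_feasible_def nonneg_vec_def by simp
  qed
  have c6: "\<forall>\<theta>. (\<theta> \<in> program_feasible W \<mu> \<and>
               (\<forall>\<theta>'\<in>program_feasible W \<mu>. total \<theta> \<le> total \<theta>'))
             \<longrightarrow> optimal_stable_equilibrium (\<lambda>\<theta>. W *v \<theta>) \<mu> \<theta>"
  proof (intro allI impI)
    fix \<theta> :: "real^'k"
    assume a: "\<theta> \<in> program_feasible W \<mu> \<and> (\<forall>\<theta>'\<in>program_feasible W \<mu>. total \<theta> \<le> total \<theta>')"
    have nn: "\<forall>i. 0 \<le> \<theta> $ i" and fe: "\<forall>i. \<mu> $ i \<le> (W *v \<theta>) $ i"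
      and q: "\<theta> \<bullet> (W *v \<theta>) - \<mu> \<bullet> \<theta> \<le> 0"
      using a unfolding program_feasible_def nonneg_vec_def by auto
    have tn: "\<forall>i\<in>UNIV. 0 \<le> \<theta> $ i * ((W *v \<theta>) $ i - \<mu> $ i)" using nn fe by simp
    have "\<theta> \<bullet> (W *v \<theta>) - \<mu> \<bullet> \<theta> = (\<Sum>i\<in>UNIV. \<theta> $ i * ((W *v \<theta>) $ i - \<mu> $ i))"
      by (simp add: inner_sum sum_subtractf algebra_simps)
    with q have "(\<Sum>i\<in>UNIV. \<theta> $ i * ((W *v \<theta>) $ i - \<mu> $ i)) = 0"
    proof -
      have "0 \<le> (\<Sum>i\<in>UNIV. \<theta> $ i * ((W *v \<theta>) $ i - \<mu> $ i))"
        using tn by (simp add: sum_nonneg)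
      then show ?thesis using q \<open>\<theta> \<bullet> (W *v \<theta>) - \<mu> \<bullet> \<theta> = _\<close> by linarith
    qed
    then have z: "\<And>i. \<theta> $ i * ((W *v \<theta>) $ i - \<mu> $ i) = 0"
      using sum_nonneg_eq_0_iff[of UNIV "\<lambda>i. \<theta> $ i * ((W *v \<theta>) $ i - \<mu> $ i)"] tn by simp
    have st: "stable_equilibrium (\<lambda>\<theta>. W *v \<theta>) \<mu> \<theta>"
      unfolding stable_equilibrium_def nonneg_vec_def feasible_def
    proof (intro conjI)
      show "\<forall>i. 0 \<le> \<theta> $ i" by (rule nn)
      show "\<forall>i. \<mu> $ i \<le> (W *v \<theta>) $ i" by (rule fe)
      show "\<not> (\<exists>i x. 0 \<le> x \<and> x < \<theta> $ i \<and> \<mu> $ i \<le> (W *v (\<chi> j. if j = i then x else \<theta> $ j)) $ i)"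
      proof
        assume "\<exists>i x. 0 \<le> x \<and> x < \<theta> $ i \<and> \<mu> $ i \<le> (W *v (\<chi> j. if j = i then x else \<theta> $ j)) $ i"
        then obtain i x where h: "0 \<le> x" "x < \<theta> $ i" "\<mu> $ i \<le> (W *v \<theta>) $ i - \<theta> $ i + x"
          unfolding update_mv[OF diag] by blast
        then have "\<theta> $ i > 0" "(W *v \<theta>) $ i - \<mu> $ i > 0" by linarith+
        then have "\<theta> $ i * ((W *v \<theta>) $ i - \<mu> $ i) > 0" by simp
        with z[of i] show False by linarith
      qed
    qed
    show "optimal_stable_equilibrium (\<lambda>\<theta>. W *v \<theta>) \<mu> \<theta>"
      unfolding optimal_stable_equilibrium_def using st a stab_in by blast
  qed
  show ?thesis using c1 c2 c3 c4 c5 c6 by blast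
qed

end
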